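(* Let $G=S_n$ and $H=S_a\wr S_a$ (the stabiliser of a partition of $\{1,\dots,n\}$ into $a$ blocks of size $a$), where $n=a^2$ and $a\geqslant 3$. Then $b(G,H)=3$.
   Context: For a subgroup $H\leqslant G$, $H_G=\bigcap_{g\in G}H^g$ is the core of $H$, and $b(G,H)=\min\{|S| : S\subseteq G,\ \bigcap_{g\in S}H^g=H_G\}$. Equivalently here, $b(G,H)$ is the minimal number of partitions of $\{1,\dots,n\}$ into $a$ parts of size $a$ whose common stabiliser in $S_n$ is trivial. *)

theory Defs
  imports "HOL-Combinatorics.Permutations"
begin

definition Sym :: "nat \<Rightarrow> (nat \<Rightarrow> nat) set" where
  "Sym n = {p. p permutes {..<n}}"

definition conjugate :: "(nat \<Rightarrow> nat) set \<Rightarrow> (nat \<Rightarrow> nat) \<Rightarrow> (nat \<Rightarrow> nat) set" where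
  "conjugate H g = {inv g \<circ> h \<circ> g | h. h \<in> H}"

definition core :: "(nat \<Rightarrow> nat) set \<Rightarrow> (nat \<Rightarrow> nat) set \<Rightarrow> (nat \<Rightarrow> nat) set" where
  "core G H = (\<Inter>g\<in>G. conjugate H g)"

definition base_size :: "(nat \<Rightarrow> nat) set \<Rightarrow> (nat \<Rightarrow> nat) set \<Rightarrow> nat" where
  "base_size G H = (LEAST k. \<exists>S. S \<subseteq> G \<and> finite S \<and> card S = k \<and>
                        (\<Inter>g\<in>S. conjugate H g) = core G H)"

definition std_partition :: "nat \<Rightarrow> nat set set" where
  "std_partition a = {{a * i + j | j. j < a} | i. i < a}"

definition wreath_stab :: "nat \<Rightarrow> (nat \<Rightarrow> nat) set" where
  "wreath_stab a = {p \<in> Sym (a^2). \<forall>B \<in> std_partition a. p ` B \<in> std_partition a}"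

end

theory Submission
  imports Defs
begin


definition L :: "nat \<Rightarrow> nat \<Rightarrow> nat" where
  "L s d = (if d = 0 then (if s = 0 then 1 else 0) else if s = 0 \<and> d = 1 then 0
            else if d \<le> s then s else s + 1)"

lemma L_col1: "L r (Suc 0) = r" by (simp add: L_def)

lemma rigid:
  assumes a3: "3 \<le> a" and sr: "\<forall>r<a. \<sigma> r < a" and tr: "\<forall>c<a. \<tau> c < a"
    and si: "inj_on \<sigma> {..<a}" and ti: "inj_on \<tau> {..<a}"
    and P: "\<And>r c r' c'. r<a \<Longrightarrow> c<a \<Longrightarrow> r'<a \<Longrightarrow> c'<a \<Longrightarrow>
              (L (\<sigma> r) (\<tau> c) = L (\<sigma> r') (\<tau> c')) = (L r c = L r' c')"
  shows "(\<forall>r<a. \<sigma> r = r) \<and> (\<forall>c<a. \<tau> c = c)"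
proof -
  have ssurj: "\<sigma> ` {..<a} = {..<a}" using sr si by (intro endo_inj_surj) auto
  have t1: "\<tau> 1 = 1"
  proof (rule ccontr)
    assume ne: "\<tau> 1 \<noteq> 1"
    define d where "d = \<tau> 1"
    have da: "d < a" using tr a3 d_def by auto
    obtain p p' where pp: "p < a" "p' < a" "p \<noteq> p'" "L p d = L p' d"
    proof (cases "d = 0")
      case True
      then show ?thesis using that[of 1 2] a3 by (auto simp: L_def)
    next
      case False
      then have "d \<ge> 2" using ne d_def by auto
      then show ?thesis using that[of "d - 1" d] da by (auto simp: L_def)
    qed
    obtain r where r: "r < a" "\<sigma> r = p" using pp(1) ssurj by (metis imageE lessThan_iff)
    obtain r' where r': "r' < a" "\<sigma> r' = p'" using pp(2) ssurj by (metis imageE lessThan_iff)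
    have "L r 1 = L r' 1" using P[of r 1 r' 1] r r' pp a3 d_def by auto
    then have "r = r'" by (simp add: L_col1)
    then show False using r r' pp by auto
  qed
  have tr1: "\<And>r' c' r. r'<a \<Longrightarrow> c'<a \<Longrightarrow> r < a \<Longrightarrow> L r' c' = r \<Longrightarrow> L (\<sigma> r') (\<tau> c') = \<sigma> r"
  proof -
    fix r' c' r assume h: "r'<a" "c'<a" "r < a" "L r' c' = r"
    have "L r' c' = L r 1" using h by (simp add: L_col1)
    then have "L (\<sigma> r') (\<tau> c') = L (\<sigma> r) (\<tau> 1)" using P[of r' c' r 1] h a3 by auto
    then show "L (\<sigma> r') (\<tau> c') = \<sigma> r" using t1 by (simp add: L_col1)
  qed
  have step: "\<And>c. 2 \<le> c \<Longrightarrow> c < a \<Longrightarrow> \<sigma> c = Suc (\<sigma> (c - 1)) \<and> \<tau> c = \<sigma> c \<and> 1 \<le> \<sigma> (c-1)"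
  proof -
    fix c assume c: "2 \<le> c" "c < a"
    have A: "L (\<sigma> c) (\<tau> c) = \<sigma> c" using tr1[of c c c] c by (simp add: L_def)
    have B: "L (\<sigma> (c-1)) (\<tau> c) = \<sigma> c" using tr1[of "c-1" c c] c by (simp add: L_def)
    have tc1: "\<tau> c \<noteq> 1" proof
      assume "\<tau> c = 1"
      then have "\<tau> c = \<tau> 1" using t1 by simp
      then have "c = 1" using ti c a3 by (auto dest: inj_onD)
      then show False using c by simp
    qed
    have sne: "\<sigma> (c-1) \<noteq> \<sigma> c" proof
      assume "\<sigma> (c-1) = \<sigma> c"
      then have "c - 1 = c" using si c by (auto dest: inj_onD)
      then show False using c by simp
    qed
    from A tc1 have T: "1 \<le> \<tau> c \<and> \<tau> c \<le> \<sigma> c" by (auto simp: L_def split: if_splits)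
    from B T sne show "\<sigma> c = Suc (\<sigma> (c - 1)) \<and> \<tau> c = \<sigma> c \<and> 1 \<le> \<sigma> (c-1)"
      by (auto simp: L_def split: if_splits)
  qed
  have chain: "\<And>k. 1 + k < a \<Longrightarrow> \<sigma> (1 + k) = \<sigma> 1 + k"
  proof -
    fix k show "1 + k < a \<Longrightarrow> \<sigma> (1 + k) = \<sigma> 1 + k"
    proof (induction k)
      case 0 then show ?case by simp
    next
      case (Suc k)
      then show ?case using step[of "2 + k"] by simp
    qed
  qed
  have s1ge: "1 \<le> \<sigma> 1" using step[of 2] a3 by simp
  have "\<sigma> (1 + (a - 2)) = \<sigma> 1 + (a - 2)" using chain[of "a-2"] a3 by simp
  moreover have "\<sigma> (1 + (a - 2)) < a" using sr a3 by simp
  ultimately have s1: "\<sigma> 1 = 1" using s1ge by simp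
  have sc: "\<And>c. 1 \<le> c \<Longrightarrow> c < a \<Longrightarrow> \<sigma> c = c" using chain s1
    by (metis add.commute le_add_diff_inverse)
  have s0: "\<sigma> 0 = 0"
  proof (rule ccontr)
    assume "\<sigma> 0 \<noteq> 0"
    then have "\<sigma> (\<sigma> 0) = \<sigma> 0" using sc sr a3 by simp
    then show False using si \<open>\<sigma> 0 \<noteq> 0\<close> sr a3 by (metis inj_onD lessThan_iff less_le_trans zero_less_numeral)
  qed
  have sall: "\<forall>r<a. \<sigma> r = r" using sc s0 by (metis less_one not_less)
  have tc: "\<And>c. 1 \<le> c \<Longrightarrow> c < a \<Longrightarrow> \<tau> c = c"
    using step sc t1 by (metis One_nat_def Suc_1 Suc_le_eq le_neq_implies_less)
  have t0: "\<tau> 0 = 0"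
  proof (rule ccontr)
    assume "\<tau> 0 \<noteq> 0"
    then have "\<tau> (\<tau> 0) = \<tau> 0" using tc tr a3 by simp
    then show False using ti \<open>\<tau> 0 \<noteq> 0\<close> tr a3 by (metis inj_onD lessThan_iff less_le_trans zero_less_numeral)
  qed
  show ?thesis using sall tc t0 by (metis less_one not_less)
qed



definition blk :: "nat \<Rightarrow> nat \<Rightarrow> nat set" where
  "blk a i = {a*i+j | j. j<a}"

lemma std_part_eq: "std_partition a = {blk a i | i. i<a}"
  by (simp add: std_partition_def blk_def)

lemma in_blk: "0 < a \<Longrightarrow> z \<in> blk a i \<longleftrightarrow> z div a = i"
proof
  assume "0 < a" "z \<in> blk a i" then show "z div a = i" by (auto simp: blk_def)
next
  assume "0 < a" "z div a = i"
  then have "z = a*i + z mod a" "z mod a < a" by auto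
  then show "z \<in> blk a i" unfolding blk_def by blast
qed

lemma blk_img: "blk a i = (\<lambda>j. a*i+j) ` {..<a}" by (auto simp: blk_def)

lemma card_blk: "card (blk a i) = a"
  by (simp add: blk_img card_image inj_on_def)

lemma div_lt_sq: "(z::nat) < a^2 \<Longrightarrow> z div a < a"
  by (cases "a = 0") (auto simp: power2_eq_square div_less_iff_less_mult)

lemma blk_bound: "(i::nat) < a \<Longrightarrow> j < a \<Longrightarrow> a*i+j < a^2"
proof -
  assume "i < a" "j < a"
  have "a*(Suc i) \<le> a*a" using \<open>i < a\<close> by (intro mult_le_mono2) simp
  then show ?thesis using \<open>j < a\<close> by (simp add: power2_eq_square)
qed

lemma blk_in: "x < a^2 \<Longrightarrow> blk a (x div a) \<in> std_partition a"
  using div_lt_sq by (auto simp: std_part_eq)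

lemma wreath_pres:
  assumes q: "q \<in> wreath_stab a" and a: "0 < a" and x: "x < a^2" and y: "y < a^2"
  shows "(q x div a = q y div a) = (x div a = y div a)"
proof -
  have qp: "q permutes {..<a^2}" using q by (simp add: wreath_stab_def Sym_def)
  have img: "\<And>z. z < a^2 \<Longrightarrow> q ` blk a (z div a) = blk a (q z div a)"
  proof -
    fix z assume z: "z < a^2"
    have "q ` blk a (z div a) \<in> std_partition a" using q blk_in[OF z] by (simp add: wreath_stab_def)
    then obtain i where i: "q ` blk a (z div a) = blk a i" by (auto simp: std_part_eq)
    have "z \<in> blk a (z div a)" using a by (simp add: in_blk)
    then have "q z \<in> blk a i" using i by blast
    then have "i = q z div a" using a by (simp add: in_blk)
    then show "q ` blk a (z div a) = blk a (q z div a)" using i by simp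
  qed
  show ?thesis
  proof
    assume e: "q x div a = q y div a"
    have "q ` blk a (x div a) = q ` blk a (y div a)" using img[OF x] img[OF y] e by simp
    moreover have "x \<in> blk a (x div a)" using a by (simp add: in_blk)
    ultimately have "q x \<in> q ` blk a (y div a)" by blast
    then obtain y' where "y' \<in> blk a (y div a)" "q x = q y'" by blast
    then have "x \<in> blk a (y div a)" using permutes_inj[OF qp] by (metis injD)
    then show "x div a = y div a" using a by (simp add: in_blk)
  next
    assume e: "x div a = y div a"
    have "y \<in> blk a (x div a)" using a e by (simp add: in_blk)
    then have "q y \<in> blk a (q x div a)" using img[OF x] by blast
    then show "q x div a = q y div a" using a by (simp add: in_blk)
  qed
qed

lemma stab_char:
  assumes qp: "q permutes {..<a^2}" and a: "0 < a"
    and pr: "\<forall>x<a^2. \<forall>y<a^2. x div a = y div a \<longrightarrow> q x div a = q y div a"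
  shows "q \<in> wreath_stab a"
proof -
  have "q ` B \<in> std_partition a" if B: "B \<in> std_partition a" for B
  proof -
    obtain i where i: "i < a" "B = blk a i" using B by (auto simp: std_part_eq)
    have ai: "a*i < a^2" using blk_bound[OF i(1), of 0] a by simp
    have sub: "q ` B \<subseteq> blk a (q (a*i) div a)"
    proof
      fix z assume "z \<in> q ` B"
      then obtain w where w: "w \<in> blk a i" "z = q w" using i by blast
      have wd: "w div a = i" using w a by (simp add: in_blk)
      obtain j where j: "j < a" "w = a*i+j" using w(1) unfolding blk_def by blast
      have wl: "w < a^2" using blk_bound[OF i(1) j(1)] j(2) by simp
      have "(a*i) div a = i" using a by simp
      then have "q w div a = q (a*i) div a" using pr wl ai wd by metis
      then show "z \<in> blk a (q (a*i) div a)" using w a by (simp add: in_blk)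
    qed
    have "card (q ` B) = card B" by (rule card_image[OF permutes_inj_on[OF qp]])
    then have "card (q ` B) = card (blk a (q (a*i) div a))"
      using i(2) card_blk by metis
    then have "q ` B = blk a (q (a*i) div a)"
      by (intro card_subset_eq[OF _ sub]) (simp add: blk_img)
    moreover have "q (a*i) < a^2" using ai permutes_in_image[OF qp] by simp
    then have "q (a*i) div a < a" by (rule div_lt_sq)
    ultimately show ?thesis unfolding std_part_eq by blast
  qed
  then show ?thesis using qp by (simp add: wreath_stab_def Sym_def)
qed

lemma conj_mem:
  assumes g: "g permutes {..<a^2}" and h: "h permutes {..<a^2}" and a: "0 < a"
    and pr: "\<forall>u<a^2. \<forall>v<a^2. g u div a = g v div a \<longrightarrow> g (h u) div a = g (h v) div a"
  shows "h \<in> conjugate (wreath_stab a) g"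
proof -
  define q where "q = g \<circ> h \<circ> inv g"
  have qp: "q permutes {..<a^2}" unfolding q_def
    by (intro permutes_compose permutes_inv g h)
  have "\<forall>x<a^2. \<forall>y<a^2. x div a = y div a \<longrightarrow> q x div a = q y div a"
  proof (intro allI impI)
    fix x y assume x: "x < a^2" and y: "y < a^2" and e: "x div a = y div a"
    have ux: "inv g x < a^2" using x permutes_in_image[OF permutes_inv[OF g]] by simp
    have uy: "inv g y < a^2" using y permutes_in_image[OF permutes_inv[OF g]] by simp
    have "g (inv g x) div a = g (inv g y) div a" using e by (simp only: permutes_inverses[OF g])
    then have "g (h (inv g x)) div a = g (h (inv g y)) div a" using pr ux uy by blast
    then show "q x div a = q y div a" by (simp only: q_def o_def)
  qed
  then have "q \<in> wreath_stab a" by (rule stab_char[OF qp a])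
  moreover have "h = inv g \<circ> q \<circ> g"
    by (simp only: q_def fun_eq_iff o_def permutes_inverses[OF g] simp_thms)
  ultimately show ?thesis unfolding conjugate_def by blast
qed

lemma conj_pres:
  assumes g: "g permutes {..<a^2}" and h: "h \<in> conjugate (wreath_stab a) g" and a: "0 < a"
  shows "h permutes {..<a^2} \<and> (\<forall>u<a^2. \<forall>v<a^2. (g (h u) div a = g (h v) div a) = (g u div a = g v div a))"
proof -
  obtain q where q: "q \<in> wreath_stab a" "h = inv g \<circ> q \<circ> g" using h unfolding conjugate_def by blast
  have qp: "q permutes {..<a^2}" using q by (simp add: wreath_stab_def Sym_def)
  have "inv g \<circ> q \<circ> g permutes {..<a^2}" by (intro permutes_compose permutes_inv g qp)
  then have "h permutes {..<a^2}" using q(2) by simp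
  moreover have "\<forall>u<a^2. \<forall>v<a^2. (g (h u) div a = g (h v) div a) = (g u div a = g v div a)"
  proof (intro allI impI)
    fix u v assume u: "u < a^2" and v: "v < a^2"
    have e1: "g (h u) = q (g u)" "g (h v) = q (g v)" unfolding q(2) o_def by (simp_all only: permutes_inverses[OF g])
    have "g u < a^2" "g v < a^2" using u v permutes_in_image[OF g] by simp_all
    then have "(q (g u) div a = q (g v) div a) = (g u div a = g v div a)"
      by (rule wreath_pres[OF q(1) a])
    then show "(g (h u) div a = g (h v) div a) = (g u div a = g v div a)"
      unfolding e1 .
  qed
  ultimately show ?thesis by blast
qed

lemma id_stab: "id \<in> wreath_stab a"
  by (simp add: wreath_stab_def Sym_def permutes_id)

lemma id_conj: "g permutes {..<a^2} \<Longrightarrow> id \<in> conjugate (wreath_stab a) g"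
proof -
  assume g: "g permutes {..<a^2}"
  have "id = inv g \<circ> id \<circ> g" using permutes_inv_o[OF g] by simp
  then show ?thesis using id_stab unfolding conjugate_def by blast
qed




definition tr :: "nat \<Rightarrow> nat \<Rightarrow> nat" where
  "tr a x = (if x < a^2 then a*(x mod a) + x div a else x)"

lemma tr_lt: "x < a^2 \<Longrightarrow> tr a x < a^2"
  by (cases "a = 0") (auto simp: tr_def intro!: blk_bound div_lt_sq)

lemma tr_tr: "x < a^2 \<Longrightarrow> tr a (tr a x) = x"
proof -
  assume x: "x < a^2"
  then have a: "0 < a" by (cases a) auto
  have d: "x div a < a" using div_lt_sq x .
  have "tr a (tr a x) = a*((a*(x mod a) + x div a) mod a) + (a*(x mod a) + x div a) div a"
    using tr_lt[OF x] x by (simp add: tr_def)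
  also have "\<dots> = a*(x div a) + x mod a" using d a by simp
  also have "\<dots> = x" by simp
  finally show ?thesis .
qed

lemma tr_perm: "tr a permutes {..<a^2}"
proof (rule bij_imp_permutes)
  show "bij_betw (tr a) {..<a^2} {..<a^2}"
    by (rule bij_betw_byWitness[where f'="tr a"]) (auto simp: tr_tr tr_lt)
  show "\<And>x. x \<notin> {..<a^2} \<Longrightarrow> tr a x = x" by (simp add: tr_def)
qed

lemma tr_div: "x < a^2 \<Longrightarrow> tr a x div a = x mod a"
  by (cases "a = 0") (auto simp: tr_def div_lt_sq)

definition G :: "nat \<Rightarrow> nat \<Rightarrow> nat" where
  "G a y = (if y < a^2 then (if y mod a = 0 then y div a else a + (y div a)*(a-1) + y mod a - 1) else y)"

definition Gi :: "nat \<Rightarrow> nat \<Rightarrow> nat" where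
  "Gi a z = (if z < a^2 then (if z < a then a*z else a*((z-a) div (a-1)) + (z-a) mod (a-1) + 1) else z)"

lemma G_facts:
  assumes a: "a = Suc b" "1 \<le> b"
  shows "y < a^2 \<Longrightarrow> G a y < a^2 \<and> Gi a (G a y) = y"
    and "z < a^2 \<Longrightarrow> Gi a z < a^2 \<and> G a (Gi a z) = z"
proof -
  assume y: "y < a^2"
  define r where "r = y div a"
  define c where "c = y mod a"
  have yrc: "y = a*r + c" by (simp add: r_def c_def)
  have r: "r \<le> b" using div_lt_sq[OF y] a by (simp add: r_def)
  have c: "c \<le> b" using a by (simp add: c_def)
  show "G a y < a^2 \<and> Gi a (G a y) = y"
  proof (cases "c = 0")
    case True
    then have "G a y = r" using y by (simp add: G_def r_def c_def)
    moreover have "r < a^2" using r a by (simp add: power2_eq_square)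
    moreover have "r < a" using r a by simp
    ultimately show ?thesis using True yrc by (simp add: Gi_def)
  next
    case False
    have rb: "b*r \<le> b*b" using r by simp
    have Gy: "G a y = a + r*b + c - 1" using y False a by (simp add: G_def r_def c_def)
    have e: "a + r*b + c - 1 = b + b*r + c" using a False by simp
    have a2: "a^2 = b*b + 2*b + 1" using a by (simp add: power2_eq_square algebra_simps)
    have lt: "a + r*b + c - 1 < a^2" unfolding e a2 using rb c by linarith
    have ge: "\<not> (a + r*b + c - 1 < a)" using False a by simp
    have w: "a + r*b + c - 1 - a = (c - 1) + r*b" using False by simp
    obtain c' where c': "c = Suc c'" using False by (cases c) auto
    have cb: "c' < b" using c c' by simp
    have dv: "((c - 1) + r*b) div b = r" using cb c' by simp
    have md: "((c - 1) + r*b) mod b = c - 1" using cb c' by simp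
    show ?thesis using Gy lt ge w dv md a False yrc by (simp add: Gi_def)
  qed
next
  assume z: "z < a^2"
  show "Gi a z < a^2 \<and> G a (Gi a z) = z"
  proof (cases "z < a")
    case True
    have "a * z < a^2" using True by (simp add: power2_eq_square)
    moreover have "(a*z) mod a = 0" "(a*z) div a = z"
      using zero_less_Suc[of b] unfolding a(1)[symmetric] by simp_all
    ultimately show ?thesis using True z by (simp add: Gi_def G_def)
  next
    case False
    define w where "w = z - a"
    define q where "q = w div b"
    define m where "m = w mod b"
    have wqm: "w = q*b + m" by (simp add: q_def m_def)
    have mb: "m < b" using a by (simp add: m_def)
    have "w < a*b" using z False a by (simp add: w_def power2_eq_square algebra_simps)
    then have qa: "q < a" using a by (simp add: q_def div_less_iff_less_mult mult.commute)
    have Gi_z: "Gi a z = a*q + (m + 1)" using z False a by (simp add: Gi_def w_def q_def m_def)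
    have m1: "m + 1 < a" using mb a by simp
    have lt: "a*q + (m+1) < a^2" using blk_bound[OF qa m1] .
    have dm1: "(a*q + (m+1)) div a = q" by (rule div_nat_eqI) (use m1 in auto)
    have "(a*q + (m+1)) mod a = (m+1) mod a" by (metis add.commute mod_mult_self2)
    then have dm: "(a*q + (m+1)) div a = q" "(a*q + (m+1)) mod a = m + 1" using dm1 m1 by simp_all
    have "G a (a*q + (m+1)) = a + q*(a-1) + (m+1) - 1" using lt dm by (simp add: G_def)
    also have "\<dots> = z" using wqm False a by (simp add: w_def)
    finally show ?thesis using Gi_z lt by simp
  qed
qed

lemma G_perm: assumes "2 \<le> a" shows "G a permutes {..<a^2}"
proof -
  obtain b where a: "a = Suc b" "1 \<le> b" using assms by (cases a) auto
  show ?thesis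
  proof (rule bij_imp_permutes)
    show "bij_betw (G a) {..<a^2} {..<a^2}"
      by (rule bij_betw_byWitness[where f'="Gi a"]) (use G_facts[OF a] in auto)
    show "\<And>x. x \<notin> {..<a^2} \<Longrightarrow> G a x = x" by (simp add: G_def)
  qed
qed

definition g3 :: "nat \<Rightarrow> nat \<Rightarrow> nat" where
  "g3 a = G a \<circ> Transposition.transpose 0 1"

lemma g3_perm: "2 \<le> a \<Longrightarrow> g3 a permutes {..<a^2}"
  unfolding g3_def
  by (intro permutes_compose G_perm permutes_swap_id) (auto simp: power2_eq_square intro: less_le_trans[of _ 2 "a*a"] mult_le_mono[of 2 a 1 a, simplified])

lemma g3_lab:
  assumes a3: "2 \<le> a" and u: "u < a^2"
  shows "g3 a u div a = L (u div a) (u mod a)"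
proof -
  obtain b where a: "a = Suc b" "1 \<le> b" using a3 by (cases a) auto
  have "2*1 \<le> a*a" using a3 by (intro mult_le_mono) auto
  then have sq: "Suc 0 < a^2" by (simp add: power2_eq_square)
  show ?thesis
  proof (cases "u = 0")
    case True
    then show ?thesis using a3 sq by (simp add: g3_def G_def L_def)
  next
    case F0: False
    show ?thesis
    proof (cases "u = 1")
      case True
      then show ?thesis using a3 sq by (simp add: g3_def G_def L_def)
    next
      case F1: False
      define r where "r = u div a"
      define c where "c = u mod a"
      have urc: "u = a*r + c" by (simp add: r_def c_def)
      have r: "r \<le> b" using div_lt_sq[OF u] a by (simp add: r_def)
      have c: "c \<le> b" using a by (simp add: c_def)
      have gu: "g3 a u = G a u" using F0 F1 by (simp add: g3_def transpose_def)
      show ?thesis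
      proof (cases "c = 0")
        case True
        then have "r \<noteq> 0" using F0 urc by auto
        have "G a u = r" using u True by (simp add: G_def r_def c_def)
        moreover have "r div a = 0" using r a by simp
        moreover have "L r c = 0" using True \<open>r \<noteq> 0\<close> by (simp add: L_def)
        ultimately show ?thesis using gu by (simp add: r_def c_def)
      next
        case False
        have nr01: "\<not> (r = 0 \<and> c = 1)" using F1 urc by auto
        have Gu: "G a u = a + r*b + c - 1" using u False a by (simp add: G_def r_def c_def)
        have "(a + r*b + c - 1) div a = (if c \<le> r then r else r + 1)"
        proof (cases "c \<le> r")
          case True
          have "(a + r*b + c - 1) div a = r"
            by (rule div_nat_eqI) (use True False r a in \<open>simp_all add: algebra_simps\<close>)
          then show ?thesis using True by simp
        next
          case F: False
          have "(a + r*b + c - 1) div a = r + 1"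
            by (rule div_nat_eqI) (use F False c a in \<open>simp_all add: algebra_simps\<close>)
          then show ?thesis using F by simp
        qed
        then show ?thesis using gu Gu False nr01 by (simp add: L_def r_def[symmetric] c_def[symmetric])
      qed
    qed
  qed
qed




lemma two_conj:
  assumes g1: "g1 permutes {..<a^2}" and g2: "g2 permutes {..<a^2}" and a: "2 \<le> a"
  shows "\<exists>h. h \<noteq> id \<and> h \<in> conjugate (wreath_stab a) g1 \<and> h \<in> conjugate (wreath_stab a) g2"
proof (cases "\<exists>u<a^2. \<exists>v<a^2. u \<noteq> v \<and> g1 u div a = g1 v div a \<and> g2 u div a = g2 v div a")
  case True
  then obtain u v where uv: "u < a^2" "v < a^2" "u \<noteq> v" "g1 u div a = g1 v div a" "g2 u div a = g2 v div a"
    by blast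
  define h where "h = Transposition.transpose u v"
  have hp: "h permutes {..<a^2}" unfolding h_def using uv by (intro permutes_swap_id) auto
  have k1: "\<And>x. g1 (h x) div a = g1 x div a" using uv(4) by (simp add: h_def transpose_def)
  have k2: "\<And>x. g2 (h x) div a = g2 x div a" using uv(5) by (simp add: h_def transpose_def)
  have "h \<in> conjugate (wreath_stab a) g1" using conj_mem[OF g1 hp] a k1 by simp
  moreover have "h \<in> conjugate (wreath_stab a) g2" using conj_mem[OF g2 hp] a k2 by simp
  moreover have "h \<noteq> id" using uv(3) by (metis h_def id_apply transpose_apply_first)
  ultimately show ?thesis by blast
next
  case False
  define N where "N = a^2"
  define \<phi> where "\<phi> u = (g1 u div a, g2 u div a)" for u
  have inj: "inj_on \<phi> {..<N}" using False unfolding inj_on_def \<phi>_def N_def by auto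
  have sub: "\<phi> ` {..<N} \<subseteq> {..<a} \<times> {..<a}"
    using permutes_in_image[OF g1] permutes_in_image[OF g2] div_lt_sq
    unfolding \<phi>_def N_def by auto
  have ceq: "card (\<phi> ` {..<N}) = card ({..<a} \<times> {..<a})"
    using card_image[OF inj] by (simp add: card_cartesian_product N_def power2_eq_square)
  have im: "\<phi> ` {..<N} = {..<a} \<times> {..<a}" by (rule card_subset_eq[OF _ sub ceq]) simp
  define sw where "sw i = (if i = (0::nat) then 1 else if i = 1 then 0 else i)" for i
  define \<rho> where "\<rho> p = (sw (fst p), snd p :: nat)" for p
  have swa: "\<And>i. i < a \<Longrightarrow> sw i < a" using a by (auto simp: sw_def)
  have sww: "\<And>i. sw (sw i) = i" by (simp add: sw_def)
  define h where "h u = (if u < N then inv_into {..<N} \<phi> (\<rho> (\<phi> u)) else u)" for u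
  have rin: "\<And>u. u < N \<Longrightarrow> \<rho> (\<phi> u) \<in> \<phi> ` {..<N}"
  proof -
    fix u assume "u < N"
    then have "\<phi> u \<in> {..<a} \<times> {..<a}" using sub by blast
    then show "\<rho> (\<phi> u) \<in> \<phi> ` {..<N}" using im swa by (auto simp: \<rho>_def)
  qed
  have hN: "\<And>u. u < N \<Longrightarrow> h u < N"
  proof -
    fix u assume u: "u < N"
    have "inv_into {..<N} \<phi> (\<rho> (\<phi> u)) \<in> {..<N}" by (rule inv_into_into[OF rin[OF u]])
    then show "h u < N" using u by (simp add: h_def)
  qed
  have ph: "\<And>u. u < N \<Longrightarrow> \<phi> (h u) = \<rho> (\<phi> u)"
  proof -
    fix u assume u: "u < N"
    have "\<phi> (inv_into {..<N} \<phi> (\<rho> (\<phi> u))) = \<rho> (\<phi> u)" by (rule f_inv_into_f[OF rin[OF u]])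
    then show "\<phi> (h u) = \<rho> (\<phi> u)" using u by (simp add: h_def)
  qed
  have rr: "\<And>p. \<rho> (\<rho> p) = p" by (simp add: \<rho>_def sww)
  have hinj: "inj_on h {..<N}"
  proof (rule inj_onI)
    fix u v assume u: "u \<in> {..<N}" and v: "v \<in> {..<N}" and e: "h u = h v"
    have "\<rho> (\<phi> u) = \<rho> (\<phi> v)" using ph[of u] ph[of v] u v e by simp
    then have "\<phi> u = \<phi> v" by (metis rr)
    then show "u = v" using inj u v by (auto dest: inj_onD)
  qed
  have himg: "h ` {..<N} = {..<N}" using hinj hN by (intro endo_inj_surj) auto
  have hp: "h permutes {..<a^2}" unfolding N_def[symmetric]
  proof (rule bij_imp_permutes)
    show "bij_betw h {..<N} {..<N}" using hinj himg by (simp add: bij_betw_def)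
    show "\<And>x. x \<notin> {..<N} \<Longrightarrow> h x = x" by (simp add: h_def)
  qed
  have k1: "\<And>u. u < a^2 \<Longrightarrow> g1 (h u) div a = sw (g1 u div a)"
    using ph unfolding N_def \<phi>_def \<rho>_def by (metis fst_conv)
  have k2: "\<And>u. u < a^2 \<Longrightarrow> g2 (h u) div a = g2 u div a"
    using ph unfolding N_def \<phi>_def \<rho>_def by (metis snd_conv)
  have "h \<in> conjugate (wreath_stab a) g1" using conj_mem[OF g1 hp] a k1 by simp
  moreover have "h \<in> conjugate (wreath_stab a) g2" using conj_mem[OF g2 hp] a k2 by simp
  moreover have "h \<noteq> id"
  proof
    assume hid: "h = id"
    have "(0::nat, 0::nat) \<in> \<phi> ` {..<N}" using im a by auto
    then obtain u where u: "u < N" "\<phi> u = (0,0)" by auto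
    have "\<phi> (h u) = (1, 0)" using ph[OF u(1)] u(2) by (simp add: \<rho>_def sw_def)
    then show False using hid u(2) by simp
  qed
  ultimately show ?thesis by blast
qed




lemma upper_rigid:
  assumes a3: "3 \<le> a"
    and h1: "h \<in> conjugate (wreath_stab a) id"
    and h2: "h \<in> conjugate (wreath_stab a) (tr a)"
    and h3: "h \<in> conjugate (wreath_stab a) (g3 a)"
  shows "h = id"
proof -
  have a0: "0 < a" using a3 by simp
  have a2: "2 \<le> a" using a3 by simp
  have c1: "h permutes {..<a^2} \<and> (\<forall>u<a^2. \<forall>v<a^2. (id (h u) div a = id (h v) div a) = (id u div a = id v div a))"
    using conj_pres[OF permutes_id h1 a0] .
  then have hp: "h permutes {..<a^2}" by blast
  have hlt: "\<And>u. u < a^2 \<Longrightarrow> h u < a^2" using permutes_in_image[OF hp] by simp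
  have P1: "\<And>u v. u<a^2 \<Longrightarrow> v<a^2 \<Longrightarrow> (h u div a = h v div a) = (u div a = v div a)"
    using c1 by simp
  have P2: "\<And>u v. u<a^2 \<Longrightarrow> v<a^2 \<Longrightarrow> (h u mod a = h v mod a) = (u mod a = v mod a)"
    using conj_pres[OF tr_perm h2 a0] hlt by (simp add: tr_div)
  have P3: "\<And>u v. u<a^2 \<Longrightarrow> v<a^2 \<Longrightarrow>
      (L (h u div a) (h u mod a) = L (h v div a) (h v mod a)) = (L (u div a) (u mod a) = L (v div a) (v mod a))"
    using conj_pres[OF g3_perm[OF a2] h3 a0] hlt by (simp add: g3_lab[OF a2])
  define \<sigma> where "\<sigma> r = h (a*r) div a" for r
  define \<tau> where "\<tau> c = h c mod a" for c
  have ar: "\<And>r. r < a \<Longrightarrow> a*r < a^2" using blk_bound[of _ a 0] by simp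
  have ca: "\<And>c. c < a \<Longrightarrow> c < a^2" using blk_bound[of 0 a] a0 by simp
  have hrc: "\<And>r c. r < a \<Longrightarrow> c < a \<Longrightarrow> h (a*r+c) = a * \<sigma> r + \<tau> c"
  proof -
    fix r c assume r: "r < a" and c: "c < a"
    have x: "a*r+c < a^2" using blk_bound r c .
    have "h (a*r+c) div a = h (a*r) div a" using P1[OF x ar[OF r]] c by simp
    moreover have "h (a*r+c) mod a = h c mod a" using P2[OF x ca[OF c]] c by simp
    moreover have "h (a*r+c) = a*(h (a*r+c) div a) + h (a*r+c) mod a" by simp
    ultimately show "h (a*r+c) = a * \<sigma> r + \<tau> c" unfolding \<sigma>_def \<tau>_def by simp
  qed
  have sr: "\<forall>r<a. \<sigma> r < a" using hlt ar div_lt_sq by (simp add: \<sigma>_def)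
  have tr': "\<forall>c<a. \<tau> c < a" using a0 by (simp add: \<tau>_def)
  have si: "inj_on \<sigma> {..<a}"
  proof (rule inj_onI)
    fix r r' assume "r \<in> {..<a}" "r' \<in> {..<a}" "\<sigma> r = \<sigma> r'"
    then show "r = r'" using P1[OF ar ar] a0 by (simp add: \<sigma>_def)
  qed
  have ti: "inj_on \<tau> {..<a}"
  proof (rule inj_onI)
    fix c c' assume "c \<in> {..<a}" "c' \<in> {..<a}" "\<tau> c = \<tau> c'"
    then show "c = c'" using P2[OF ca ca] by (simp add: \<tau>_def)
  qed
  have P: "\<And>r c r' c'. r<a \<Longrightarrow> c<a \<Longrightarrow> r'<a \<Longrightarrow> c'<a \<Longrightarrow>
              (L (\<sigma> r) (\<tau> c) = L (\<sigma> r') (\<tau> c')) = (L r c = L r' c')"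
  proof -
    fix r c r' c' assume r: "r<a" and c: "c<a" and r': "r'<a" and c': "c'<a"
    have "\<tau> c < a" "\<tau> c' < a" using tr' c c' by auto
    then show "(L (\<sigma> r) (\<tau> c) = L (\<sigma> r') (\<tau> c')) = (L r c = L r' c')"
      using P3[OF blk_bound[OF r c] blk_bound[OF r' c']] hrc[OF r c] hrc[OF r' c'] r c r' c'
      by simp
  qed
  have ids: "(\<forall>r<a. \<sigma> r = r) \<and> (\<forall>c<a. \<tau> c = c)" using rigid[OF a3 sr tr' si ti P] .
  show "h = id"
  proof
    fix x
    show "h x = id x"
    proof (cases "x < a^2")
      case True
      have x: "x = a*(x div a) + x mod a" by simp
      have d: "x div a < a" and m: "x mod a < a" using True div_lt_sq a0 by auto
      have "h x = a * \<sigma> (x div a) + \<tau> (x mod a)" using hrc[OF d m] by simp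
      also have "\<dots> = a * (x div a) + x mod a" using ids d m by simp
      finally show ?thesis by simp
    next
      case False
      then show ?thesis using permutes_not_in[OF hp] by simp
    qed
  qed
qed




lemma le2_cover:
  assumes S: "finite S" "card S \<le> 2" "S \<subseteq> A" "x0 \<in> A"
  shows "\<exists>g1\<in>A. \<exists>g2\<in>A. S \<subseteq> {g1, g2}"
proof (cases "S = {}")
  case True
  then have "S \<subseteq> {x0, x0}" by simp
  then show ?thesis using S(4) by blast
next
  case False
  then obtain g1 where g1: "g1 \<in> S" by blast
  have "card (S - {g1}) = card S - 1" using g1 by (rule card_Diff_singleton)
  then have "card (S - {g1}) \<le> Suc 0" using S(2) by simp
  then have all: "\<forall>x\<in>S - {g1}. \<forall>y\<in>S - {g1}. x = y"
    using card_le_Suc0_iff_eq[of "S - {g1}"] S(1) by simp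
  show ?thesis
  proof (cases "S - {g1} = {}")
    case True
    then have "S \<subseteq> {g1, g1}" by blast
    moreover have "g1 \<in> A" using g1 S(3) by (rule subsetD[rotated])
    ultimately show ?thesis by blast
  next
    case False
    then obtain g2 where g2: "g2 \<in> S - {g1}" by blast
    have "S \<subseteq> {g1, g2}"
    proof
      fix x assume "x \<in> S"
      then show "x \<in> {g1, g2}" using all g2 by (cases "x = g1") auto
    qed
    moreover have "g1 \<in> A" "g2 \<in> A" using g1 g2 S(3) by auto
    ultimately show ?thesis by blast
  qed
qed

theorem proposition2p6:
  fixes a n :: nat
  assumes "n = a^2" and "a \<ge> 3"
  shows "base_size (Sym n) (wreath_stab a) = 3"
proof -
  have a3: "3 \<le> a" using assms by simp
  have a2: "2 \<le> a" using a3 by simp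
  define H where "H = wreath_stab a"
  define S3 where "S3 = {id, tr a, g3 a}"
  have m1: "id \<in> Sym n" by (simp add: Sym_def permutes_id)
  have m2: "tr a \<in> Sym n" using tr_perm assms(1) by (simp add: Sym_def)
  have m3: "g3 a \<in> Sym n" using g3_perm[OF a2] assms(1) by (simp add: Sym_def)
  have S3sub: "S3 \<subseteq> Sym n" using m1 m2 m3 by (simp add: S3_def)
  have I3: "(\<Inter>g\<in>S3. conjugate H g) = {id}"
  proof
    show "(\<Inter>g\<in>S3. conjugate H g) \<subseteq> {id}"
    proof
      fix h assume h: "h \<in> (\<Inter>g\<in>S3. conjugate H g)"
      have "h \<in> conjugate H id" "h \<in> conjugate H (tr a)" "h \<in> conjugate H (g3 a)"
        using h unfolding S3_def by blast+
      then have "h = id" unfolding H_def by (rule upper_rigid[OF a3])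
      then show "h \<in> {id}" by simp
    qed
    show "{id} \<subseteq> (\<Inter>g\<in>S3. conjugate H g)"
    proof -
      have "id \<in> conjugate H g" if "g \<in> S3" for g
      proof -
        have "g permutes {..<a^2}" using that S3sub assms(1) by (auto simp: Sym_def)
        then show ?thesis unfolding H_def by (rule id_conj)
      qed
      then show ?thesis by blast
    qed
  qed
  have idc: "id \<in> core (Sym n) H"
  proof -
    have "id \<in> conjugate H g" if "g \<in> Sym n" for g
    proof -
      have "g permutes {..<a^2}" using that assms(1) by (simp add: Sym_def)
      then show ?thesis unfolding H_def by (rule id_conj)
    qed
    then show ?thesis unfolding core_def by blast
  qed
  have core: "core (Sym n) H = {id}"
  proof
    have "core (Sym n) H \<subseteq> (\<Inter>g\<in>S3. conjugate H g)"
      using S3sub unfolding core_def by blast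
    then show "core (Sym n) H \<subseteq> {id}" using I3 by simp
    show "{id} \<subseteq> core (Sym n) H" using idc by simp
  qed
  have "2*1 \<le> a*a" using a2 by (intro mult_le_mono) auto
  then have sq: "1 < a^2" by (simp add: power2_eq_square)
  have t1: "tr a 1 = a" using sq a2 by (simp add: tr_def)
  have t0: "tr a 0 = 0" by (simp add: tr_def)
  have g30: "g3 a 0 = a" using sq a2 by (simp add: g3_def G_def)
  have n1: "id \<noteq> tr a"
  proof
    assume "id = tr a" then have "tr a 1 = 1" by (metis id_apply)
    then show False using t1 a2 by simp
  qed
  have n2: "id \<noteq> g3 a"
  proof
    assume "id = g3 a" then have "g3 a 0 = 0" by (metis id_apply)
    then show False using g30 a2 by simp
  qed
  have n3: "tr a \<noteq> g3 a"
  proof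
    assume "tr a = g3 a" then have "g3 a 0 = 0" using t0 by metis
    then show False using g30 a2 by simp
  qed
  have cS3: "card S3 = 3" unfolding S3_def using n1 n2 n3 by simp
  have fS3: "finite S3" by (simp add: S3_def)
  have ex: "\<exists>S. S \<subseteq> Sym n \<and> finite S \<and> card S = 3 \<and>
                        (\<Inter>g\<in>S. conjugate H g) = core (Sym n) H"
    using S3sub fS3 cS3 I3 core by blast
  have low: "3 \<le> k" if "\<exists>S. S \<subseteq> Sym n \<and> finite S \<and> card S = k \<and>
                        (\<Inter>g\<in>S. conjugate H g) = core (Sym n) H" for k
  proof (rule ccontr)
    assume k: "\<not> 3 \<le> k"
    from that obtain S where S: "S \<subseteq> Sym n" "finite S" "card S = k"
      "(\<Inter>g\<in>S. conjugate H g) = core (Sym n) H" by blast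
    have "card S \<le> 2" using S(3) k by simp
    then obtain g1 g2 where g: "g1 \<in> Sym n" "g2 \<in> Sym n" "S \<subseteq> {g1, g2}"
      using le2_cover[OF S(2) _ S(1) m1] by blast
    have gp: "g1 permutes {..<a^2}" "g2 permutes {..<a^2}" using g(1,2) assms(1) by (simp_all add: Sym_def)
    obtain h where h: "h \<noteq> id" "h \<in> conjugate H g1" "h \<in> conjugate H g2"
      using two_conj[OF gp a2] unfolding H_def by blast
    have "h \<in> (\<Inter>g\<in>S. conjugate H g)" using h(2,3) g(3) by blast
    then have "h \<in> core (Sym n) H" using S(4) by simp
    then show False using core h(1) by simp
  qed
  have "(LEAST k. \<exists>S. S \<subseteq> Sym n \<and> finite S \<and> card S = k \<and>
                        (\<Inter>g\<in>S. conjugate H g) = core (Sym n) H) = 3"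
    proof (rule Least_equality)
    show "\<exists>S. S \<subseteq> Sym n \<and> finite S \<and> card S = 3 \<and>
                        (\<Inter>g\<in>S. conjugate H g) = core (Sym n) H" by (fact ex)
  next
    fix k assume "\<exists>S. S \<subseteq> Sym n \<and> finite S \<and> card S = k \<and>
                        (\<Inter>g\<in>S. conjugate H g) = core (Sym n) H"
    then show "3 \<le> k" by (rule low)
  qed
  then show ?thesis unfolding base_size_def H_def .
qed


end
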